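(* Let $Y=\{(x,y)\in\mathbb{R}^2:(x/a)^2+y^2=1\}$ with $1<a\le\sqrt2$. The six vertices of the two inscribed equilateral triangles $\Delta_{(\pm a,0)}$ (those with a vertex at $(a,0)$, resp. $(-a,0)$, of side length $r_1=\frac{4\sqrt3 a}{a^2+3}$) are global minima of $s:Y\to\mathbb{R}$; the six vertices of the two inscribed equilateral triangles $\Delta_{(0,\pm1)}$ (with a vertex at $(0,1)$, resp. $(0,-1)$, of side length $r_2=\frac{4\sqrt3a^2}{3a^2+1}$) are global maxima of $s$; and $s$ has no other local extrema.
   Context: For $1<a\le\sqrt2$, every $p\in Y$ is a vertex of a unique equilateral triangle (Euclidean) inscribed in $Y$; $s(p)$ denotes its side length. Explicitly $\Delta_{(a,0)}$ has vertices $(a,0)$ and $\bigl(-\frac{3a-a^3}{a^2+3},\pm\frac{2\sqrt3a}{a^2+3}\bigr)$, $\Delta_{(-a,0)}$ is its reflection in the $y$-axis, $\Delta_{(0,1)}$ has vertices $(0,1)$ and $\bigl(\pm\frac{2\sqrt3a^2}{3a^2+1},-\frac{3a^2-1}{3a^2+1}\bigr)$, and $\Delta_{(0,-1)}$ is its reflection in the $x$-axis. *)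

theory Defs
  imports "HOL-Analysis.Analysis"
begin

text \<open>Points of the plane are pairs of reals; dist on real \<times> real is the Euclidean distance.\<close>

definition ellipseY :: "real \<Rightarrow> (real \<times> real) set" where
  "ellipseY a = {(x, y). (x / a)^2 + y^2 = 1}"

definition inscribed_equilateral :: "real \<Rightarrow> real \<times> real \<Rightarrow> real \<times> real \<Rightarrow> real \<times> real \<Rightarrow> bool" where
  "inscribed_equilateral a p q r \<longleftrightarrow>
     p \<in> ellipseY a \<and> q \<in> ellipseY a \<and> r \<in> ellipseY a \<and>
     p \<noteq> q \<and> q \<noteq> r \<and> r \<noteq> p \<and>
     dist p q = dist q r \<and> dist q r = dist r p"

definition side_s :: "real \<Rightarrow> real \<times> real \<Rightarrow> real" where
  "side_s a p = (THE l. \<exists>q r. inscribed_equilateral a p q r \<and> l = dist p q)"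

definition tri_a_vertices :: "real \<Rightarrow> (real \<times> real) set" where
  "tri_a_vertices a =
     {(a, 0), (-(3*a - a^3)/(a^2 + 3), 2* sqrt 3*a/(a^2 + 3)),
              (-(3*a - a^3)/(a^2 + 3), -(2* sqrt 3*a/(a^2 + 3))),
      (-a, 0), ((3*a - a^3)/(a^2 + 3), 2* sqrt 3*a/(a^2 + 3)),
              ((3*a - a^3)/(a^2 + 3), -(2* sqrt 3*a/(a^2 + 3)))}"

definition tri_1_vertices :: "real \<Rightarrow> (real \<times> real) set" where
  "tri_1_vertices a =
     {(0, 1), (2* sqrt 3*a^2/(3*a^2 + 1), -(3*a^2 - 1)/(3*a^2 + 1)),
              (-(2* sqrt 3*a^2/(3*a^2 + 1)), -(3*a^2 - 1)/(3*a^2 + 1)),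
      (0, -1), (2* sqrt 3*a^2/(3*a^2 + 1), (3*a^2 - 1)/(3*a^2 + 1)),
              (-(2* sqrt 3*a^2/(3*a^2 + 1)), (3*a^2 - 1)/(3*a^2 + 1))}"

definition local_min_on :: "(real \<times> real) set \<Rightarrow> (real \<times> real \<Rightarrow> real) \<Rightarrow> real \<times> real \<Rightarrow> bool" where
  "local_min_on S f p \<longleftrightarrow> p \<in> S \<and> (\<exists>e>0. \<forall>q\<in>S. dist q p < e \<longrightarrow> f p \<le> f q)"

definition local_max_on :: "(real \<times> real) set \<Rightarrow> (real \<times> real \<Rightarrow> real) \<Rightarrow> real \<times> real \<Rightarrow> bool" where
  "local_max_on S f p \<longleftrightarrow> p \<in> S \<and> (\<exists>e>0. \<forall>q\<in>S. dist q p < e \<longrightarrow> f q \<le> f p)"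

end

theory Submission
  imports Defs
begin


definition kap :: "real \<Rightarrow> real" where "kap a = (a^2-1)^2/(8*a^2)"
definition gam :: "real \<Rightarrow> real" where "gam a = (a^4-1)/(8*a^2)"
definition PP :: "real \<Rightarrow> real" where "PP a = (1-a^2)/(4*a^2)"
definition QQ :: "real \<Rightarrow> real" where "QQ a = (1+a^2)/(4*a^2)"
definition m0 :: "real \<Rightarrow> complex \<Rightarrow> complex" where
  "m0 a e = of_real (kap a) * cnj e ^ 3 + of_real (gam a) * e ^ 3"
definition VV :: "real \<Rightarrow> complex \<Rightarrow> complex" where "VV a e = e + m0 a e"
definition Er :: "real \<Rightarrow> complex \<Rightarrow> real" where "Er a z = (Re z / a)^2 + (Im z)^2"
definition Eh :: "real \<Rightarrow> complex \<Rightarrow> complex" where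
  "Eh a z = of_real (PP a) * (z^2 + cnj z ^2) + 2 * of_real (QQ a) * z * cnj z"

lemma Eh_Er: assumes "a \<noteq> 0" shows "Eh a z = of_real (Er a z)"
proof -
  obtain x y where z: "z = Complex x y" by (cases z) auto
  show ?thesis unfolding z Eh_def Er_def PP_def QQ_def
    using assms by (simp add: complex_eq_iff power2_eq_square field_simps)
qed

lemma rel1: assumes "a \<noteq> 0" shows "PP a * gam a + QQ a * kap a = 0"
  unfolding PP_def QQ_def gam_def kap_def using assms
  by (simp add: field_simps) algebra

lemma rel2: assumes "a \<noteq> 0" shows "PP a * kap a + QQ a * gam a = - PP a / 2"
  unfolding PP_def QQ_def gam_def kap_def using assms
  by (simp add: field_simps) algebra

lemma m0_rel: assumes "a \<noteq> 0"
  shows "of_real (PP a) * m0 a e + of_real (QQ a) * cnj (m0 a e) = - of_real (PP a / 2) * cnj e ^ 3"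
proof -
  have "of_real (PP a) * m0 a e + of_real (QQ a) * cnj (m0 a e)
      = of_real (PP a * kap a + QQ a * gam a) * cnj e ^ 3 + of_real (PP a * gam a + QQ a * kap a) * e^3"
    unfolding m0_def by (simp add: algebra_simps)
  then show ?thesis using rel1[OF assms] rel2[OF assms] by simp
qed

lemma Eh_shift:
  assumes "a \<noteq> 0" "e * cnj e = 1" "u * cnj u = 1" "u^3 = e^3"
  shows "Eh a (m0 a e + u) = Eh a (m0 a e) + 2 * of_real (QQ a)"
proof -
  define m where "m = m0 a e"
  define P where "P = (of_real (PP a) :: complex)"
  define Q where "Q = (of_real (QQ a) :: complex)"
  have X: "P * m + Q * cnj m = - (P/2) * cnj e ^ 3" unfolding m_def P_def Q_def
    using m0_rel[OF assms(1)] by simp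
  have Xc: "P * cnj m + Q * m = - (P/2) * e ^ 3"
    using arg_cong[OF X, of cnj] by (simp add: P_def Q_def)
  have v3: "cnj u ^3 = cnj e ^3" using arg_cong[OF assms(4), of cnj] by simp
  have "Eh a (m + u) = P * (m^2 + cnj m^2) + 2*Q*m*cnj m + 2 * Q * (u * cnj u)
        + P*(u^2 + cnj u^2) + 2*u*(P * m + Q * cnj m) + 2 * cnj u * (P * cnj m + Q * m)"
    unfolding Eh_def P_def Q_def by (simp add: algebra_simps power2_eq_square)
  also have "\<dots> = Eh a m + 2 * Q"
    unfolding X Xc using assms(3) v3 assms(4)
    unfolding Eh_def P_def[symmetric] Q_def[symmetric]
    by algebra
  finally show ?thesis unfolding m_def Q_def .
qed


lemma Er_scale: "Er a (of_real t * z) = t^2 * Er a z"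
  unfolding Er_def by (simp add: power2_eq_square field_simps)

lemma Er_pos: assumes "a \<noteq> 0" "z \<noteq> 0" shows "Er a z > 0"
proof -
  have "Re z \<noteq> 0 \<or> Im z \<noteq> 0" using assms(2) complex_eq_iff by force
  then show ?thesis unfolding Er_def using assms(1)
    by (auto simp add: add_pos_nonneg add_nonneg_pos)
qed

lemma ray_unique:
  assumes "a \<noteq> 0" "Er a (of_real t * z) = 1" "Er a (of_real s * z) = 1" "t > 0" "s > 0"
  shows "t = s"
proof -
  have "z \<noteq> 0" using assms(2) unfolding Er_def by auto
  then have p: "Er a z > 0" using Er_pos assms(1) by blast
  have "t^2 * Er a z = s^2 * Er a z" using assms(2,3) unfolding Er_scale by simp
  then have "t^2 = s^2" using p by simp
  then show ?thesis using assms(4,5) by (simp add: power2_eq_iff)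
qed

lemma bounds:
  assumes "1 < a" "a \<le> sqrt 2"
  shows "0 \<le> kap a" "kap a \<le> 1/16" "kap a \<le> gam a" "gam a \<le> 3/16" "0 \<le> gam a"
proof -
  define b where "b = a^2"
  have b1: "1 < b" unfolding b_def using assms(1) by (simp add: one_less_power)
  have "a^2 \<le> (sqrt 2)^2" using assms by (intro power_mono) auto
  then have b2: "b \<le> 2" unfolding b_def by simp
  have a4: "a^4 = b^2" unfolding b_def by simp
  have k: "kap a = (b-1)^2/(8*b)" unfolding kap_def b_def by simp
  have g: "gam a = (b^2-1)/(8*b)" unfolding gam_def a4 b_def by simp
  show "0 \<le> kap a" unfolding k using b1 by simp
  have "(2*b-1)*(b-2) \<le> 0" using b1 b2 by (intro mult_nonneg_nonpos) auto
  then have "2*(b-1)^2 \<le> b" by (simp add: power2_eq_square algebra_simps)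
  then show "kap a \<le> 1/16" unfolding k using b1 by (simp add: field_simps)
  have "(b-1)^2 \<le> b^2 - 1" using b1 by (simp add: power2_eq_square algebra_simps)
  then show "kap a \<le> gam a" unfolding k g using b1 by (simp add: divide_right_mono)
  have "(2*b+1)*(b-2) \<le> 0" using b1 b2 by (intro mult_nonneg_nonpos) auto
  then have "2*(b^2-1) \<le> 3*b" by (simp add: power2_eq_square algebra_simps)
  then show "gam a \<le> 3/16" unfolding g using b1 by (simp add: field_simps)
  have "1 \<le> b^2" using b1 by (simp add: one_le_power)
  then show "0 \<le> gam a" unfolding g using b1 by simp
qed

lemma unit_cnj: "cmod e = 1 \<Longrightarrow> cnj e * e = 1"
  using complex_norm_square[of e] by (simp add: complex_mult_cnj mult.commute)

lemma cmod_m0: assumes "cmod e = 1" shows "cmod (m0 a e) \<le> \<bar>kap a\<bar> + \<bar>gam a\<bar>"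
proof -
  have "cmod (m0 a e) \<le> cmod (of_real (kap a) * cnj e ^ 3) + cmod (of_real (gam a) * e ^ 3)"
    unfolding m0_def by (rule norm_triangle_ineq)
  also have "\<dots> = \<bar>kap a\<bar> + \<bar>gam a\<bar>" using assms by (simp add: norm_mult norm_power)
  finally show ?thesis .
qed

lemma VV_nz: assumes "1 < a" "a \<le> sqrt 2" "cmod e = 1" shows "VV a e \<noteq> 0"
proof
  assume "VV a e = 0"
  then have "e = - m0 a e" unfolding VV_def by (simp add: eq_neg_iff_add_eq_0)
  then have "1 = cmod (m0 a e)" using assms(3) by (metis norm_minus_cancel)
  also have "\<dots> \<le> \<bar>kap a\<bar> + \<bar>gam a\<bar>" by (rule cmod_m0[OF assms(3)])
  also have "\<dots> < 1" using bounds[OF assms(1,2)] by simp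
  finally show False by simp
qed


lemma cross_real:
  fixes x1 y1 x2 y2 k g :: real
  shows "(x1 + (k+g)*(x1^3 - 3*x1*y1^2)) * (y2 + (g-k)*(3*x2^2*y2 - y2^3))
       - (y1 + (g-k)*(3*x1^2*y1 - y1^3)) * (x2 + (k+g)*(x2^3 - 3*x2*y2^2)) =
     (x1*y2 - y1*x2) * (1 + (g^2 - k^2) * (3 - 4 * (x1*y2 - y1*x2)^2)
        + 4 * g * (x1*x2 + y1*y2) * (x1*x2 - y1*y2)
        - 2 * k * ((x1*x2 - y1*y2)^2 - (x1*y2 + y1*x2)^2))
     + (-3*y1*x2*g + 3*y1*x2*k + -3*y1*x2*y2^2*g^2 + -6*y1*x2*y2^2*k + 3*y1*x2*y2^2*k^2 + 4*y1*x2^3*g + -3*y1*x2^3*g^2 + -2*y1*x2^3*k + 3*y1*x2^3*k^2 + 1*x1*y2*g + 1*x1*y2*k + 3*x1*y2^3*g^2 + -2*x1*y2^3*k + -3*x1*y2^3*k^2 + -4*x1*x2^2*y2*g + 3*x1*x2^2*y2*g^2 + 2*x1*x2^2*y2*k + -3*x1*x2^2*y2*k^2) * (x1^2 + y1^2 - 1) + (3*y1*x2*g + -3*y1*x2*g^2 + -3*y1*x2*k + 3*y1*x2*k^2 + -4*y1^3*x2*g + 4*y1^3*x2*k + -1*x1*y2*g + 3*x1*y2*g^2 + -1*x1*y2*k + -3*x1*y2*k^2 + 4*x1*y1^2*y2*g + 4*x1*y1^2*y2*k) * (x2^2 + y2^2 - 1)"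
  by algebra


lemma VV_coords:
  "Re (VV a (Complex x y)) = x + (kap a + gam a) * (x^3 - 3*x*y^2)"
  "Im (VV a (Complex x y)) = y + (gam a - kap a) * (3*x^2*y - y^3)"
  unfolding VV_def m0_def by (simp_all add: power3_eq_cube power2_eq_square algebra_simps)

lemma VV_neg: "VV a (- e) = - VV a e"
  unfolding VV_def m0_def by (simp add: power3_eq_cube)

lemma Qf_pos:
  fixes x1 y1 x2 y2 k g :: real
  assumes "x1^2 + y1^2 = 1" "x2^2 + y2^2 = 1" "0 \<le> k" "k \<le> 1/16" "k \<le> g" "g \<le> 3/16"
  shows "1 + (g^2 - k^2) * (3 - 4 * (x1*y2 - y1*x2)^2)
        + 4 * g * (x1*x2 + y1*y2) * (x1*x2 - y1*y2)
        - 2 * k * ((x1*x2 - y1*y2)^2 - (x1*y2 + y1*x2)^2) > 0"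
proof -
  define S where "S = x1*y2 - y1*x2"
  define C where "C = x1*x2 + y1*y2"
  define D where "D = x1*x2 - y1*y2"
  define T where "T = x1*y2 + y1*x2"
  have "C^2 + S^2 = (x1^2+y1^2)*(x2^2+y2^2)" unfolding C_def S_def by algebra
  then have l1: "C^2 + S^2 = 1" using assms(1,2) by simp
  have "D^2 + T^2 = (x1^2+y1^2)*(x2^2+y2^2)" unfolding D_def T_def by algebra
  then have l2: "D^2 + T^2 = 1" using assms(1,2) by simp
  have S2: "S^2 \<le> 1" "0 \<le> S^2" using l1 zero_le_power2[of C] by (linarith, simp)
  have "C^2 \<le> 1" using l1 zero_le_power2[of S] by linarith
  then have C1: "\<bar>C\<bar> \<le> 1" using abs_square_le_1 by blast
  have "D^2 \<le> 1" using l2 zero_le_power2[of T] by linarith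
  then have D1: "\<bar>D\<bar> \<le> 1" using abs_square_le_1 by blast
  have CD: "\<bar>C*D\<bar> \<le> 1" using C1 D1 by (simp add: abs_mult mult_le_one)
  have D2: "D^2 - T^2 \<le> 1" using l2 zero_le_power2[of T] by linarith
  have gk: "0 \<le> g^2 - k^2" using assms(3,5) by (simp add: power_mono)
  have t1: "(g^2 - k^2) * (3 - 4*S^2) \<ge> (g^2 - k^2) * (-1)"
    using gk S2 by (intro mult_left_mono) auto
  have "-1 \<le> C*D" using CD by linarith
  then have t2: "g * (C*D) \<ge> g * (-1)" using assms(3,5) by (intro mult_left_mono) auto
  have t3: "k * (D^2 - T^2) \<le> k" using D2 assms(3) by (simp add: mult_left_le)
  have g2: "g^2 \<le> 9/256" using assms(3,5,6) power_mono[of g "3/16" 2] by (simp add: power2_eq_square)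
  have t1: "(g^2 - k^2) * (3 - 4*S^2) \<ge> k^2 - g^2" using t1 by simp
  have t2: "g*(C*D) \<ge> -g" using t2 by simp
  have eq: "1 + (g^2 - k^2) * (3 - 4 * S^2) + 4 * g * C * D - 2 * k * (D^2 - T^2)
     = 1 + (g^2 - k^2) * (3 - 4 * S^2) + 4 * (g * (C * D)) - 2 * (k * (D^2 - T^2))"
    by (simp add: algebra_simps)
  have "1 + (g^2 - k^2) * (3 - 4 * S^2) + 4 * (g * (C * D)) - 2 * (k * (D^2 - T^2)) > 0"
    using t1 t2 t3 g2 assms(4,6) zero_le_power2[of k] by linarith
  then have "1 + (g^2 - k^2) * (3 - 4 * S^2) + 4 * g * C * D - 2 * k * (D^2 - T^2) > 0"
    using eq by linarith
  then show ?thesis unfolding S_def C_def D_def T_def .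
qed


lemma cross_zero:
  assumes "1 < a" "a \<le> sqrt 2" "x1^2 + y1^2 = 1" "x2^2 + y2^2 = 1"
    "Re (VV a (Complex x1 y1)) * Im (VV a (Complex x2 y2)) - Im (VV a (Complex x1 y1)) * Re (VV a (Complex x2 y2)) = 0"
  shows "x1*y2 - y1*x2 = 0"
proof -
  note b = bounds[OF assms(1,2)]
  have "0 = (x1*y2 - y1*x2) * (1 + ((gam a)^2 - (kap a)^2) * (3 - 4 * (x1*y2 - y1*x2)^2)
        + 4 * gam a * (x1*x2 + y1*y2) * (x1*x2 - y1*y2)
        - 2 * kap a * ((x1*x2 - y1*y2)^2 - (x1*y2 + y1*x2)^2))"
    using assms(5) unfolding VV_coords using cross_real[of x1 "kap a" "gam a" y1 y2 x2] assms(3,4)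
    by (simp add: add.commute)
  moreover have "(1 + ((gam a)^2 - (kap a)^2) * (3 - 4 * (x1*y2 - y1*x2)^2)
        + 4 * gam a * (x1*x2 + y1*y2) * (x1*x2 - y1*y2)
        - 2 * kap a * ((x1*x2 - y1*y2)^2 - (x1*y2 + y1*x2)^2)) > 0"
    by (rule Qf_pos) (use assms(3,4) b in auto)
  ultimately show ?thesis by simp
qed


lemma rho_unique:
  assumes "1 < a" "a \<le> sqrt 2" "cmod e1 = 1" "cmod e2 = 1" "r1 > 0" "r2 > 0"
    "of_real r1 * VV a e1 = of_real r2 * VV a e2"
  shows "r1 = r2"
proof -
  obtain x1 y1 where e1: "e1 = Complex x1 y1" by (cases e1) auto
  obtain x2 y2 where e2: "e2 = Complex x2 y2" by (cases e2) auto
  have u1: "x1^2 + y1^2 = 1" using assms(3) unfolding e1 cmod_def by simp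
  have u2: "x2^2 + y2^2 = 1" using assms(4) unfolding e2 cmod_def by simp
  have V2: "VV a e2 = of_real (r1/r2) * VV a e1" using assms(6,7)
    by (simp add: field_simps)
  have "Re (VV a e1) * Im (VV a e2) - Im (VV a e1) * Re (VV a e2) = 0"
    unfolding V2 by simp
  then have S0: "x1*y2 - y1*x2 = 0" using cross_zero[OF assms(1,2) u1 u2] unfolding e1 e2 by simp
  define C where "C = x1*x2 + y1*y2"
  have "C^2 + (x1*y2 - y1*x2)^2 = (x1^2+y1^2)*(x2^2+y2^2)" unfolding C_def by algebra
  then have C2: "C^2 = 1" using S0 u1 u2 by simp
  define S where "S = x1*y2 - y1*x2"
  have h: "x2 = C*x1 - S*y1" "y2 = C*y1 + S*x1"
    unfolding C_def S_def using u1 by algebra+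
  have "S = 0" using S0 unfolding S_def .
  then have "x2 = C*x1" "y2 = C*y1" using h by simp_all
  then have ex: "e2 = of_real C * e1" unfolding e1 e2 by (simp add: complex_eq_iff)
  have V1nz: "VV a e1 \<noteq> 0" using VV_nz[OF assms(1,2,3)] .
  from C2 have "C = 1 \<or> C = -1" by (simp add: power2_eq_1_iff)
  then show ?thesis
  proof
    assume "C = 1"
    then have "e2 = e1" using ex by simp
    then show ?thesis using assms(7) V1nz by simp
  next
    assume "C = -1"
    then have "e2 = - e1" using ex by simp
    then have "of_real r1 * VV a e1 = - of_real r2 * VV a e1" using assms(7) VV_neg by simp
    then have "of_real (r1 + r2) * VV a e1 = 0" by (simp add: algebra_simps)
    then have "r1 + r2 = 0" using V1nz by (simp only: mult_eq_0_iff of_real_eq_0_iff) auto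
    then show ?thesis using assms(5,6) by linarith
  qed
qed


definition rho :: "real \<Rightarrow> complex \<Rightarrow> real" where "rho a e = 1 / sqrt (Er a (VV a e))"
definition Pe :: "real \<Rightarrow> complex \<Rightarrow> complex" where "Pe a e = of_real (rho a e) * VV a e"
definition toC :: "real \<times> real \<Rightarrow> complex" where "toC p = Complex (fst p) (snd p)"
definition fromC :: "complex \<Rightarrow> real \<times> real" where "fromC z = (Re z, Im z)"
definition omg :: complex where "omg = Complex (-1/2) (sqrt 3 / 2)"

lemma fromC_toC[simp]: "fromC (toC p) = p" by (cases p) (simp add: fromC_def toC_def)
lemma toC_fromC[simp]: "toC (fromC z) = z" by (simp add: fromC_def toC_def)
lemma dist_fromC: "dist (fromC z) (fromC w) = cmod (z - w)"
  by (simp add: fromC_def dist_Pair_Pair dist_real_def cmod_def)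
lemma dist_toC: "dist p q = cmod (toC p - toC q)" using dist_fromC[of "toC p" "toC q"] by simp
lemma ell_fromC: "fromC z \<in> ellipseY a \<longleftrightarrow> Er a z = 1" by (simp add: ellipseY_def fromC_def Er_def)
lemma ell_toC: "p \<in> ellipseY a \<longleftrightarrow> Er a (toC p) = 1" using ell_fromC[of "toC p"] by simp

lemma ErV_pos: assumes "1 < a" "a \<le> sqrt 2" "cmod e = 1" shows "Er a (VV a e) > 0"
  using Er_pos[of a "VV a e"] VV_nz[OF assms] assms(1) by simp

lemma rho_pos: assumes "1 < a" "a \<le> sqrt 2" "cmod e = 1" shows "rho a e > 0"
  using ErV_pos[OF assms] unfolding rho_def by simp

lemma Er_rho: assumes "1 < a" "a \<le> sqrt 2" "cmod e = 1" "Er a z = Er a (VV a e)"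
  shows "Er a (of_real (rho a e) * z) = 1"
  using ErV_pos[OF assms(1-3)] unfolding Er_scale rho_def assms(4)
  by (simp add: power_divide)

lemma Er_Pe: assumes "1 < a" "a \<le> sqrt 2" "cmod e = 1" shows "Er a (Pe a e) = 1"
  unfolding Pe_def by (rule Er_rho[OF assms refl])

lemma omg2: "omg^2 = Complex (-1/2) (- sqrt 3 / 2)"
  unfolding omg_def by (simp add: complex_eq_iff power2_eq_square)
lemma omg3: "omg^3 = 1"
  unfolding omg_def by (simp add: complex_eq_iff power3_eq_cube algebra_simps)
lemma cmod_om: "cmod omg = 1" unfolding omg_def cmod_def by (simp add: power_divide)
lemma cmod_1om: "cmod (1 - omg) = sqrt 3" unfolding omg_def cmod_def by (simp add: power_divide power2_eq_square)
lemma cmod_1om2: "cmod (1 + omg) = 1" unfolding omg_def cmod_def by (simp add: power_divide power2_eq_square)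

lemma Er_shift: assumes "1 < a" "cmod e = 1" "cmod u = 1" "u^3 = e^3"
  shows "Er a (m0 a e + u) = Er a (VV a e)"
proof -
  have a0: "a \<noteq> 0" using assms(1) by simp
  have e1: "e * cnj e = 1" using unit_cnj[OF assms(2)] by (simp add: mult.commute)
  have u1: "u * cnj u = 1" using unit_cnj[OF assms(3)] by (simp add: mult.commute)
  have "complex_of_real (Er a (m0 a e + u)) = of_real (Er a (m0 a e + e))"
    using Eh_shift[OF a0 e1 u1 assms(4)] Eh_shift[OF a0 e1 e1 refl] Eh_Er[OF a0] by simp
  then show ?thesis unfolding VV_def by (simp add: add.commute)
qed

lemma forward:
  assumes "1 < a" "a \<le> sqrt 2" "cmod e = 1"
  shows "inscribed_equilateral a (fromC (Pe a e))
           (fromC (of_real (rho a e) * (m0 a e + e * omg)))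
           (fromC (of_real (rho a e) * (m0 a e + e * omg^2)))
         \<and> dist (fromC (Pe a e)) (fromC (of_real (rho a e) * (m0 a e + e * omg))) = sqrt 3 * rho a e"
proof -
  define r where "r = rho a e"
  define m where "m = m0 a e"
  have r0: "r > 0" unfolding r_def by (rule rho_pos[OF assms])
  have c1: "cmod (e * omg) = 1" using assms(3) cmod_om by (simp add: norm_mult)
  have c2: "cmod (e * omg^2) = 1" using assms(3) cmod_om by (simp add: norm_mult norm_power)
  have p1: "(e* omg)^3 = e^3" using omg3 by (simp add: power_mult_distrib)
  have "(omg^2)^3 = 1" by (metis omg3 power_mult power_one mult.commute)
  then have p2: "(e* omg^2)^3 = e^3" by (simp add: power_mult_distrib)
  have E0: "Er a (Pe a e) = 1" by (rule Er_Pe[OF assms])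
  have E1: "Er a (of_real r * (m + e * omg)) = 1" unfolding r_def m_def
    by (rule Er_rho[OF assms Er_shift[OF assms(1,3) c1 p1]])
  have E2: "Er a (of_real r * (m + e * omg^2)) = 1" unfolding r_def m_def
    by (rule Er_rho[OF assms Er_shift[OF assms(1,3) c2 p2]])
  have PeE: "Pe a e = of_real r * (m + e)" unfolding Pe_def VV_def r_def m_def by (simp add: add.commute)
  have d01: "cmod (of_real r * (m + e) - of_real r * (m + e * omg)) = sqrt 3 * r"
  proof -
    have "of_real r * (m + e) - of_real r * (m + e * omg) = of_real r * e * (1 - omg)" by (simp add: algebra_simps)
    then show ?thesis using r0 assms(3) cmod_1om by (simp add: norm_mult)
  qed
  have d12: "cmod (of_real r * (m + e * omg) - of_real r * (m + e * omg^2)) = sqrt 3 * r"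
  proof -
    have "of_real r * (m + e * omg) - of_real r * (m + e * omg^2) = of_real r * e * omg * (1 - omg)"
      by (simp add: algebra_simps power2_eq_square)
    then show ?thesis using r0 assms(3) cmod_1om cmod_om by (simp add: norm_mult)
  qed
  have d20: "cmod (of_real r * (m + e * omg^2) - of_real r * (m + e)) = sqrt 3 * r"
  proof -
    have "of_real r * (m + e * omg^2) - of_real r * (m + e) = - (of_real r * e * (1 + omg) * (1 - omg))"
      by (simp add: algebra_simps power2_eq_square)
    then show ?thesis using r0 assms(3) cmod_1om cmod_1om2 by (simp add: norm_mult)
  qed
  have s3: "sqrt 3 * r > 0" using r0 by simp
  have inj: "fromC z \<noteq> fromC w" if "cmod (z - w) = sqrt 3 * r" for z w
  proof
    assume "fromC z = fromC w"
    then have "z = w" by (metis toC_fromC)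
    then show False using that s3 by simp
  qed
  have n01: "fromC (Pe a e) \<noteq> fromC (of_real r * (m + e * omg))" using inj d01 unfolding PeE by blast
  have n12: "fromC (of_real r * (m + e * omg)) \<noteq> fromC (of_real r * (m + e * omg^2))" using inj d12 by blast
  have n20: "fromC (of_real r * (m + e * omg^2)) \<noteq> fromC (Pe a e)" using inj d20 unfolding PeE by blast
  show ?thesis
    unfolding inscribed_equilateral_def ell_fromC dist_fromC r_def[symmetric] m_def[symmetric]
    using E0 E1 E2 d01 d12 d20 n01 n12 n20 unfolding PeE by simp
qed


lemma PQ_ineq: assumes "1 < a" shows "\<bar>PP a\<bar> < QQ a"
proof -
  have "\<bar>1 - a^2\<bar> < 1 + a^2" using assms by (simp add: abs_if)
  then show ?thesis unfolding PP_def QQ_def using assms by (simp add: abs_div divide_strict_right_mono)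
qed

lemma PQ_zero:
  assumes "1 < a" "of_real (PP a) * y + of_real (QQ a) * cnj y = 0"
  shows "y = 0"
proof (rule ccontr)
  assume nz: "y \<noteq> 0"
  have "cmod (of_real (PP a) * y) = cmod (of_real (QQ a) * cnj y)"
    using assms(2) by (metis add_eq_0_iff norm_minus_cancel)
  then have "\<bar>PP a\<bar> * cmod y = \<bar>QQ a\<bar> * cmod y" by (simp add: norm_mult)
  then have "\<bar>PP a\<bar> = \<bar>QQ a\<bar>" using nz by simp
  then show False using PQ_ineq[OF assms(1)] by simp
qed

lemma sqrt3_of_sq: assumes "complex_of_real ((cmod z)^2) = 3" shows "cmod z = sqrt 3"
proof -
  have "(cmod z)^2 = 3" using assms by (metis of_real_eq_iff of_real_numeral)
  then show ?thesis by (metis norm_ge_zero real_sqrt_unique)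
qed

lemma H1_identity:
  fixes P Q m cm w cw t :: complex
  assumes "t^2 + t + 1 = 0"
  shows "(P * ((m+w)^2 + (cm+cw)^2) + 2*Q*(m+w)*(cm+cw))
       + t^2 * (P * ((m+t*w)^2 + (cm+t^2*cw)^2) + 2*Q*(m+t*w)*(cm+t^2*cw))
       + t * (P * ((m+t^2*w)^2 + (cm+t^4*cw)^2) + 2*Q*(m+t^2*w)*(cm+t^4*cw))
       = (t^2 + t + 1) * (P * (m^2 + cm^2) + 2*Q*m*cm + 2*Q*w*cw)
         + 3 * (P * cw^2 + 2*(P*m + Q*cm)*w)"
  using assms by algebra

lemma converse:
  assumes "1 < a" "a \<le> sqrt 2" "inscribed_equilateral a p q r"
  shows "\<exists>e \<rho>. cmod e = 1 \<and> \<rho> > 0 \<and> toC p = of_real \<rho> * VV a e \<and> dist p q = sqrt 3 * \<rho>"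
proof -
  have a0: "a \<noteq> 0" using assms(1) by simp
  define P0 where "P0 = toC p"
  define Q0 where "Q0 = toC q"
  define R0 where "R0 = toC r"
  have Ep: "Er a P0 = 1" "Er a Q0 = 1" "Er a R0 = 1"
    using assms(3) unfolding inscribed_equilateral_def ell_toC P0_def Q0_def R0_def by auto
  have pq: "p \<noteq> q" and dd1: "dist p q = dist q r" and dd2: "dist q r = dist r p"
    using assms(3) unfolding inscribed_equilateral_def by auto
  define d where "d = Q0 - P0"
  have dnz: "d \<noteq> 0"
  proof
    assume "d = 0"
    then have "toC q = toC p" unfolding d_def P0_def Q0_def by simp
    then have "q = p" by (metis fromC_toC)
    then show False using pq by simp
  qed
  have c1: "cmod (R0 - P0) = cmod d" using dd1 dd2 unfolding dist_toC d_def P0_def Q0_def R0_def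
    by (simp add: norm_minus_commute)
  have c2: "cmod (R0 - Q0) = cmod d" using dd1 dd2 unfolding dist_toC d_def P0_def Q0_def R0_def
    by (simp add: norm_minus_commute)
  define z where "z = (R0 - P0) / d"
  have z1: "cmod z = 1" unfolding z_def using c1 dnz by (simp add: norm_divide)
  have "z - 1 = (R0 - Q0) / d" unfolding z_def d_def using dnz unfolding d_def by (simp add: field_simps)
  then have z2: "cmod (z - 1) = 1" using c2 dnz by (simp add: norm_divide)
  obtain x y where zxy: "z = Complex x y" by (cases z) auto
  have "sqrt (x^2 + y^2) = 1" using z1 unfolding zxy cmod_def by simp
  then have xy1: "x^2 + y^2 = 1" by simp
  have "sqrt ((x-1)^2 + y^2) = 1" using z2 unfolding zxy cmod_def by simp
  then have xy2: "(x-1)^2 + y^2 = 1" by simp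
  have x: "x = 1/2" using xy1 xy2 by (simp add: power2_eq_square algebra_simps)
  have y: "y^2 = 3/4" using xy1 x by (simp add: power2_eq_square)
  have yy: "y*y = 3/4" using y by (simp add: power2_eq_square)
  have zq: "z^2 - z + 1 = 0" unfolding zxy x by (simp add: complex_eq_iff power2_eq_square yy)
  have zc: "cnj z = 1 - z" unfolding zxy using x by (simp add: complex_eq_iff)
  have R0e: "R0 = P0 + z * d" unfolding z_def using dnz by simp
  define t where "t = z^2"
  define c where "c = (1/3 :: complex)"
  have c3: "3 * c = 1" unfolding c_def by simp
  define m where "m = P0 + d*(1+z)*c"
  define w where "w = - d*(1+z)*c"
  have hP: "P0 = m + w" unfolding m_def w_def by simp
  have hQ: "Q0 = m + t * w" unfolding m_def w_def t_def using zq c3 unfolding d_def by algebra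
  have hR: "R0 = m + t^2 * w" unfolding m_def w_def t_def R0e using zq c3 by algebra
  have t1: "t^2 + t + 1 = 0" unfolding t_def using zq by algebra
  have t3: "t^3 = 1" using t1 by algebra
  have tca: "cnj t = (1 - z)^2" unfolding t_def by (simp add: zc)
  have tcb: "(1 - z)^2 = t^2" unfolding t_def using zq by algebra
  have tc: "cnj t = t^2" using tca tcb by simp
  have tc2: "cnj (t^2) = t^4" using tc by (simp flip: power_mult)
  define PPc where "PPc = complex_of_real (PP a)"
  define QQc where "QQc = complex_of_real (QQ a)"
  have Eh1: "Eh a P0 = 1" "Eh a Q0 = 1" "Eh a R0 = 1" using Ep Eh_Er[OF a0] by simp_all
  have "Eh a (m + w) + t^2 * Eh a (m + t * w) + t * Eh a (m + t^2 * w)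
     = (t^2 + t + 1) * (PPc * (m^2 + cnj m^2) + 2*QQc*m*cnj m + 2*QQc*w*cnj w)
         + 3 * (PPc * cnj w^2 + 2*(PPc*m + QQc*cnj m)*w)"
    unfolding Eh_def PPc_def[symmetric] QQc_def[symmetric]
    using H1_identity[OF t1, where P=PPc and Q=QQc and m=m and cm="cnj m" and w=w and cw="cnj w"] tc tc2
    by (simp add: mult.assoc)
  then have "1 + t^2 + t = 3 * (PPc * cnj w^2 + 2*(PPc*m + QQc*cnj m)*w)"
    using Eh1 hP hQ hR t1 by simp
  moreover have "(1::complex) + t^2 + t = 0" using t1 by (simp add: algebra_simps)
  ultimately have "(3::complex) * (PPc * cnj w^2 + 2*(PPc*m + QQc*cnj m)*w) = 0" by metis
  then have H1: "PPc * cnj w^2 + 2*(PPc*m + QQc*cnj m)*w = 0" by (metis mult_eq_0_iff zero_neq_numeral)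
  have wnz: "w \<noteq> 0"
  proof -
    have "1 + z \<noteq> 0" unfolding zxy using x by (simp add: complex_eq_iff)
    then show ?thesis unfolding w_def c_def using dnz by simp
  qed
  define \<rho> where "\<rho> = cmod w"
  have rpos: "\<rho> > 0" unfolding \<rho>_def using wnz by simp
  define e where "e = w / of_real \<rho>"
  have e1: "cmod e = 1" unfolding e_def using rpos by (simp add: norm_divide \<rho>_def)
  have we: "w = of_real \<rho> * e" unfolding e_def using rpos by simp
  have ece: "e * cnj e = 1" using unit_cnj[OF e1] by (simp add: mult.commute)
  have "of_real \<rho> * (PPc * of_real \<rho> * cnj e^3 + 2*(PPc*m + QQc*cnj m)) = 0"
  proof -
    have "0 = (PPc * cnj w^2 + 2*(PPc*m + QQc*cnj m)*w) * cnj e" using H1 by simp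
    also have "\<dots> = of_real \<rho> * (PPc * of_real \<rho> * cnj e^3 + 2*(PPc*m + QQc*cnj m) * (e * cnj e))"
      unfolding we by (simp add: power2_eq_square power3_eq_cube algebra_simps)
    finally show ?thesis unfolding ece by simp
  qed
  then have X: "2*(PPc*m + QQc*cnj m) = - (PPc * of_real \<rho> * cnj e^3)"
    using rpos by (simp add: add_eq_0_iff2 eq_neg_iff_add_eq_0)
  define yy where "yy = m - of_real \<rho> * m0 a e"
  have m0r: "2 * (PPc * m0 a e + QQc * cnj (m0 a e)) = - (PPc * cnj e^3)"
    using m0_rel[OF a0, of e] unfolding PPc_def QQc_def by simp
  have "2 * (PPc * yy + QQc * cnj yy) = 2*(PPc*m + QQc*cnj m) - of_real \<rho> * (2 * (PPc * m0 a e + QQc * cnj (m0 a e)))"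
    unfolding yy_def by (simp add: algebra_simps)
  also have "\<dots> = 0" unfolding X m0r by (simp add: algebra_simps)
  finally have "PPc * yy + QQc * cnj yy = 0" by (metis mult_eq_0_iff zero_neq_numeral)
  then have "yy = 0" using PQ_zero[OF assms(1)] unfolding PPc_def QQc_def by blast
  then have mm: "m = of_real \<rho> * m0 a e" unfolding yy_def by simp
  have pV: "toC p = of_real \<rho> * VV a e" unfolding P0_def[symmetric] hP mm we VV_def
    by (simp add: algebra_simps)
  have "complex_of_real ((cmod (1 - t))^2) = (1 - t) * cnj (1 - t)" by (rule complex_norm_square)
  also have "\<dots> = 3" using tc t1 t3 by simp algebra
  finally have n3: "cmod (1 - t) = sqrt 3" by (rule sqrt3_of_sq)
  have "dist p q = cmod (w - t * w)" unfolding dist_toC P0_def[symmetric] Q0_def[symmetric] hP hQ by simp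
  also have "\<dots> = \<rho> * cmod (1 - t)" unfolding \<rho>_def
    by (metis mult.commute mult.right_neutral norm_mult right_diff_distrib')
  finally have "dist p q = sqrt 3 * \<rho>" using n3 by simp
  then show ?thesis using e1 rpos pV by blast
qed


lemma side_Pe:
  assumes "1 < a" "a \<le> sqrt 2" "cmod e = 1"
  shows "side_s a (fromC (Pe a e)) = sqrt 3 * rho a e"
  unfolding side_s_def
proof (rule the_equality)
  show "\<exists>q r. inscribed_equilateral a (fromC (Pe a e)) q r \<and> sqrt 3 * rho a e = dist (fromC (Pe a e)) q"
    using forward[OF assms] by metis
next
  fix l assume "\<exists>q r. inscribed_equilateral a (fromC (Pe a e)) q r \<and> l = dist (fromC (Pe a e)) q"
  then obtain q r where tr: "inscribed_equilateral a (fromC (Pe a e)) q r" and l: "l = dist (fromC (Pe a e)) q"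
    by blast
  obtain e' \<rho> where e': "cmod e' = 1" "\<rho> > 0" "toC (fromC (Pe a e)) = of_real \<rho> * VV a e'"
    "dist (fromC (Pe a e)) q = sqrt 3 * \<rho>"
    using converse[OF assms(1,2) tr] by blast
  have "of_real \<rho> * VV a e' = of_real (rho a e) * VV a e" using e'(3) unfolding Pe_def by simp
  then have "\<rho> = rho a e" using rho_unique[OF assms(1,2) e'(1) assms(3) e'(2) rho_pos[OF assms]] by blast
  then show "l = sqrt 3 * rho a e" using l e'(4) by simp
qed

lemma h_polar:
  assumes "Re h > 0"
  shows "h = of_real (cmod h) * cis (arctan (Im h / Re h))"
proof -
  define R where "R = Re h"
  define I where "I = Im h"
  have R0: "R > 0" using assms R_def by simp
  have cm: "cmod h = sqrt (R^2 + I^2)" unfolding R_def I_def cmod_def by simp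
  have "1 + (I/R)^2 = (R^2 + I^2) / R^2" using R0 by (simp add: field_simps)
  then have s: "sqrt (1 + (I/R)^2) = sqrt (R^2 + I^2) / R" using R0 by (simp add: real_sqrt_divide)
  have pos: "sqrt (R^2 + I^2) > 0" using R0 by (simp add: add_pos_nonneg)
  have re: "Re (of_real (cmod h) * cis (arctan (I/R))) = R"
    unfolding cm using R0 pos by (simp add: cos_arctan s real_sqrt_divide field_simps)
  have im: "Im (of_real (cmod h) * cis (arctan (I/R))) = I"
    unfolding cm using R0 pos by (simp add: sin_arctan s real_sqrt_divide field_simps)
  show ?thesis using re im unfolding R_def I_def by (simp add: complex_eq_iff)
qed

definition hh :: "real \<Rightarrow> real \<Rightarrow> complex" where "hh a t = cnj (cis t) * VV a (cis t)"
definition phi :: "real \<Rightarrow> real \<Rightarrow> real" where "phi a t = t + arctan (Im (hh a t) / Re (hh a t))"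

lemma hh_Re_pos: assumes "1 < a" "a \<le> sqrt 2" shows "Re (hh a t) > 0"
proof -
  define e where "e = cis t"
  have ee: "cnj e * e = 1" unfolding e_def by (simp add: cis_cnj cis_mult)
  have "hh a t = 1 + cnj e * m0 a e" unfolding hh_def e_def[symmetric] VV_def
    using ee by (simp add: algebra_simps)
  then have "Re (hh a t) = 1 + Re (cnj e * m0 a e)" by simp
  moreover have "\<bar>Re (cnj e * m0 a e)\<bar> \<le> \<bar>kap a\<bar> + \<bar>gam a\<bar>"
    using abs_Re_le_cmod[of "cnj e * m0 a e"] cmod_m0[of e a] unfolding e_def by (simp add: norm_mult)
  moreover note bounds[OF assms]
  ultimately show ?thesis by linarith
qed

lemma VV_polar: assumes "1 < a" "a \<le> sqrt 2"
  shows "VV a (cis t) = of_real (cmod (hh a t)) * cis (phi a t)"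
proof -
  have ee: "cis t * cnj (cis t) = 1" by (simp add: cis_cnj cis_mult)
  have "VV a (cis t) = cis t * hh a t" unfolding hh_def using ee
    by (metis mult.assoc mult_1)
  also have "\<dots> = cis t * (of_real (cmod (hh a t)) * cis (arctan (Im (hh a t) / Re (hh a t))))"
    using h_polar[OF hh_Re_pos[OF assms]] by metis
  also have "\<dots> = of_real (cmod (hh a t)) * cis (phi a t)"
    unfolding phi_def by (simp add: cis_mult[symmetric] algebra_simps)
  finally show ?thesis .
qed

lemma phi_cont: assumes "1 < a" "a \<le> sqrt 2" shows "continuous_on S (phi a)"
proof -
  have c: "continuous_on S (\<lambda>t. hh a t)" unfolding hh_def VV_def m0_def
    by (intro continuous_intros)
  have ne: "\<And>t. Re (hh a t) \<noteq> 0" using hh_Re_pos[OF assms] by (metis less_irrefl)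
  have "continuous_on S (\<lambda>t. t + arctan (Im (hh a t) / Re (hh a t)))"
    by (intro continuous_intros c) (simp add: ne)
  then show ?thesis unfolding phi_def by simp
qed

lemma phi_0: "phi a 0 = 0"
  unfolding phi_def hh_def VV_def m0_def by simp

lemma phi_2pi: "phi a (2*pi) = 2*pi"
  unfolding phi_def hh_def VV_def m0_def by simp

lemma surj_Pe:
  assumes "1 < a" "a \<le> sqrt 2" "p \<in> ellipseY a"
  shows "\<exists>t. p = fromC (Pe a (cis t))"
proof -
  define z where "z = toC p"
  have Ez: "Er a z = 1" using assms(3) unfolding z_def ell_toC .
  have znz: "z \<noteq> 0" using Ez unfolding Er_def by auto
  define u where "u = z / of_real (cmod z)"
  have "cmod u = 1" unfolding u_def using znz by (simp add: norm_divide)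
  then obtain \<psi> where psi: "0 \<le> \<psi>" "\<psi> < 2*pi" "u = Complex (cos \<psi>) (sin \<psi>)"
    using complex_unimodular_polar by blast
  have ucis: "u = cis \<psi>" using psi(3) by (simp add: complex_eq_iff)
  obtain t where t: "0 \<le> t" "t \<le> 2*pi" "phi a t = \<psi>"
    using IVT'[of "phi a" 0 \<psi> "2*pi"] phi_0 phi_2pi psi(1,2) phi_cont[OF assms(1,2)] by auto
  have hnz: "cmod (hh a t) > 0" using hh_Re_pos[OF assms(1,2), of t] by auto
  have V: "VV a (cis t) = of_real (cmod (hh a t)) * u" using VV_polar[OF assms(1,2), of t] t(3) ucis by simp
  have zV: "z = of_real (cmod z / cmod (hh a t)) * VV a (cis t)"
    unfolding V u_def using hnz znz by (simp add: field_simps)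
  have c1: "cmod (cis t) = 1" by simp
  have "cmod z / cmod (hh a t) = rho a (cis t)"
  proof (rule ray_unique[of a _ "VV a (cis t)"])
    show "a \<noteq> 0" using assms(1) by simp
    show "Er a (of_real (cmod z / cmod (hh a t)) * VV a (cis t)) = 1" using Ez zV by simp
    show "Er a (of_real (rho a (cis t)) * VV a (cis t)) = 1" using Er_Pe[OF assms(1,2) c1] unfolding Pe_def .
    show "cmod z / cmod (hh a t) > 0" using hnz znz by simp
    show "rho a (cis t) > 0" by (rule rho_pos[OF assms(1,2) c1])
  qed
  then have "z = Pe a (cis t)" using zV unfolding Pe_def by simp
  then have "p = fromC (Pe a (cis t))" unfolding z_def by (metis fromC_toC)
  then show ?thesis by blast
qed


definition AA :: "real \<Rightarrow> real" where
  "AA a = PP a * ((kap a)^2 + (gam a)^2) + 2 * QQ a * kap a * gam a"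
definition BB :: "real \<Rightarrow> real" where
  "BB a = 4 * PP a * kap a * gam a + 2 * QQ a * ((kap a)^2 + (gam a)^2)"
definition Dd :: "real \<Rightarrow> real \<Rightarrow> real" where
  "Dd a c = 2 * c * AA a + BB a + 2 * QQ a"

lemma Eh_m0:
  assumes "e * cnj e = 1"
  shows "Eh a (m0 a e) = (e^6 + cnj e^6) * of_real (AA a) + of_real (BB a)"
proof -
  define k where "k = complex_of_real (kap a)"
  define g where "g = complex_of_real (gam a)"
  define P where "P = complex_of_real (PP a)"
  define Q where "Q = complex_of_real (QQ a)"
  define ce where "ce = cnj e"
  have "Eh a (m0 a e) = P * ((k * ce^3 + g * e^3)^2 + (k * e^3 + g * ce^3)^2)
      + 2 * Q * (k * ce^3 + g * e^3) * (k * e^3 + g * ce^3)"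
    unfolding Eh_def m0_def k_def g_def P_def Q_def ce_def by simp
  also have "\<dots> = (e^6 + ce^6) * (P * (k^2 + g^2) + 2 * Q * k * g) + (4 * P * k * g + 2 * Q * (k^2 + g^2))"
    using assms unfolding ce_def[symmetric] by algebra
  finally show ?thesis unfolding AA_def BB_def k_def g_def P_def Q_def ce_def by simp
qed

lemma ErV_D:
  assumes "1 < a" "cmod e = 1"
  shows "Er a (VV a e) = Dd a (Re (e^6))"
proof -
  have a0: "a \<noteq> 0" using assms(1) by simp
  have ee: "e * cnj e = 1" using unit_cnj[OF assms(2)] by (simp add: mult.commute)
  have s6: "e^6 + cnj e^6 = complex_of_real (2 * Re (e^6))"
    using complex_add_cnj[of "e^6"] by simp
  have "complex_of_real (Er a (VV a e)) = Eh a (m0 a e + e)"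
    unfolding VV_def Eh_Er[OF a0] by (simp add: add.commute)
  also have "\<dots> = Eh a (m0 a e) + 2 * of_real (QQ a)" by (rule Eh_shift[OF a0 ee ee refl])
  also have "\<dots> = complex_of_real (Dd a (Re (e^6)))"
    unfolding Eh_m0[OF ee] s6 Dd_def by simp
  finally show ?thesis by (simp only: of_real_eq_iff)
qed

lemma AA_val: assumes "a \<noteq> 0" shows "AA a = (a^2 - 1)^3 / (64 * a^4)"
  unfolding AA_def PP_def QQ_def kap_def gam_def using assms
  by (simp add: field_simps) algebra

lemma Dd_1: assumes "a \<noteq> 0" shows "Dd a 1 = (a^2 + 3)^2 / (16 * a^2)"
  unfolding Dd_def AA_def BB_def PP_def QQ_def kap_def gam_def using assms
  by (simp add: field_simps) algebra

lemma Dd_m1: assumes "a \<noteq> 0" shows "Dd a (-1) = (3*a^2 + 1)^2 / (16 * a^4)"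
  unfolding Dd_def AA_def BB_def PP_def QQ_def kap_def gam_def using assms
  by (simp add: field_simps) algebra

lemma Dd_1_sq: assumes "1 < a" shows "Dd a 1 = ((a^2+3)/(4*a))^2" "(a^2+3)/(4*a) > 0"
proof -
  have a0: "a \<noteq> 0" using assms by simp
  show "Dd a 1 = ((a^2+3)/(4*a))^2" using Dd_1[OF a0] a0 by (simp add: field_simps power2_eq_square power4_eq_xxxx)
  show "(a^2+3)/(4*a) > 0" using assms by (simp add: add_nonneg_pos)
qed

lemma Dd_m1_sq: assumes "1 < a" shows "Dd a (-1) = ((3*a^2+1)/(4*a^2))^2" "(3*a^2+1)/(4*a^2) > 0"
proof -
  have a0: "a \<noteq> 0" using assms by simp
  show "Dd a (-1) = ((3*a^2+1)/(4*a^2))^2" using Dd_m1[OF a0] a0 by (simp add: field_simps power2_eq_square power4_eq_xxxx)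
  have "0 \<le> a^2" by simp
  then show "(3*a^2+1)/(4*a^2) > 0" using a0 by (simp add: add_nonneg_pos)
qed

lemma AA_pos: assumes "1 < a" shows "AA a > 0"
proof -
  have "a^2 > 1" using assms by (simp add: one_less_power)
  moreover have "a \<noteq> 0" using assms by simp
  ultimately show ?thesis using AA_val[of a] assms by simp
qed

lemma Dd_mono: assumes "1 < a" "c1 < c2" shows "Dd a c1 < Dd a c2"
  unfolding Dd_def using AA_pos[OF assms(1)] assms(2) by simp

lemma Dd_pos: assumes "1 < a" "-1 \<le> c" shows "Dd a c > 0"
proof -
  have "Dd a (-1) = ((3*a^2+1)/(4*a^2))^2" "(3*a^2+1)/(4*a^2) > 0" using Dd_m1_sq[OF assms(1)] by auto
  then have "Dd a (-1) > 0" by (metis zero_less_power)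
  moreover have "Dd a (-1) \<le> Dd a c" using Dd_mono[OF assms(1)] assms(2)
    by (cases "c = -1") (auto simp: less_eq_real_def)
  ultimately show ?thesis by linarith
qed

definition Gs :: "real \<Rightarrow> real \<Rightarrow> real" where "Gs a c = sqrt 3 / sqrt (Dd a c)"

lemma Re6_bounds: "-1 \<le> Re (e^6) \<and> Re (e^6) \<le> 1" if "cmod e = 1" for e :: complex
proof -
  have "cmod (e^6) = 1" using that by (simp add: norm_power)
  then show ?thesis using abs_Re_le_cmod[of "e^6"] by linarith
qed

lemma side_formula:
  assumes "1 < a" "a \<le> sqrt 2" "cmod e = 1"
  shows "side_s a (fromC (Pe a e)) = Gs a (Re (e^6))"
  unfolding side_Pe[OF assms] rho_def ErV_D[OF assms(1,3)] Gs_def by simp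

lemma Gs_1: assumes "1 < a" shows "Gs a 1 = 4 * sqrt 3 * a / (a^2 + 3)"
proof -
  have sq: "sqrt (Dd a 1) = (a^2+3)/(4*a)" using Dd_1_sq[OF assms] by (metis real_sqrt_abs abs_of_pos)
  show ?thesis unfolding Gs_def sq using assms by (simp add: field_simps)
qed

lemma Gs_m1: assumes "1 < a" shows "Gs a (-1) = 4 * sqrt 3 * a^2 / (3 * a^2 + 1)"
proof -
  have sq: "sqrt (Dd a (-1)) = (3*a^2+1)/(4*a^2)" using Dd_m1_sq[OF assms] by (metis real_sqrt_abs abs_of_pos)
  show ?thesis unfolding Gs_def sq using assms by (simp add: field_simps)
qed

lemma Gs_anti: assumes "1 < a" "-1 \<le> c1" "c1 \<le> c2" shows "Gs a c2 \<le> Gs a c1"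
proof -
  have p1: "Dd a c1 > 0" using Dd_pos assms by simp
  have "Dd a c1 \<le> Dd a c2" using Dd_mono[OF assms(1)] assms(3) by (cases "c1 = c2") (auto simp: less_eq_real_def)
  then have "sqrt (Dd a c1) \<le> sqrt (Dd a c2)" by simp
  moreover have "sqrt (Dd a c1) > 0" using p1 by simp
  ultimately show ?thesis unfolding Gs_def by (simp add: frac_le)
qed

lemma Gs_inj_le: assumes "1 < a" "-1 \<le> c1" "-1 \<le> c2" "Gs a c1 \<le> Gs a c2" shows "c2 \<le> c1"
proof (rule ccontr)
  assume "\<not> c2 \<le> c1"
  then have lt: "c1 < c2" by simp
  have p1: "Dd a c1 > 0" using Dd_pos assms by simp
  have "Dd a c1 < Dd a c2" using Dd_mono[OF assms(1) lt] .
  then have "sqrt (Dd a c1) < sqrt (Dd a c2)" by simp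
  moreover have "sqrt (Dd a c1) > 0" using p1 by simp
  ultimately have "Gs a c2 < Gs a c1" unfolding Gs_def
    by (simp add: divide_strict_left_mono)
  then show False using assms(4) by simp
qed


lemma VV_cnj: "VV a (cnj e) = cnj (VV a e)"
  unfolding VV_def m0_def by simp
lemma Er_cnj: "Er a (cnj z) = Er a z" unfolding Er_def by simp
lemma Er_neg: "Er a (- z) = Er a z" unfolding Er_def by (simp add: power2_eq_square)
lemma rho_cnj: "rho a (cnj e) = rho a e" unfolding rho_def VV_cnj Er_cnj ..
lemma rho_neg: "rho a (- e) = rho a e" unfolding rho_def VV_neg Er_neg ..
lemma Pe_neg: "Pe a (- e) = - Pe a e" unfolding Pe_def rho_neg VV_neg by simp
lemma Pe_cnj: "Pe a (cnj e) = cnj (Pe a e)" unfolding Pe_def rho_cnj VV_cnj by simp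

lemma Pe_eq:
  assumes "1 < a" "a \<le> sqrt 2" "cmod e = 1" "Er a z = 1" "z = of_real t * VV a e" "t > 0"
  shows "Pe a e = z"
proof -
  have "t = rho a e"
  proof (rule ray_unique[of a t "VV a e"])
    show "a \<noteq> 0" using assms(1) by simp
    show "Er a (of_real t * VV a e) = 1" using assms(4,5) by simp
    show "Er a (of_real (rho a e) * VV a e) = 1" using Er_Pe[OF assms(1-3)] unfolding Pe_def .
  qed (use assms rho_pos in auto)
  then show ?thesis using assms(5) unfolding Pe_def by simp
qed

lemma kg_sum: assumes "a \<noteq> 0" shows "kap a + gam a = (a^2 - 1)/4"
  unfolding kap_def gam_def using assms by (simp add: field_simps) algebra
lemma kg_diff: assumes "a \<noteq> 0" shows "gam a - kap a = (a^2 - 1)/(4*a^2)"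
  unfolding kap_def gam_def using assms by (simp add: field_simps) algebra

definition ea :: complex where "ea = cis (pi/6)"
definition eb :: complex where "eb = cis (pi/3)"

lemma ea_val: "ea = Complex (sqrt 3 / 2) (1/2)" unfolding ea_def by (simp add: complex_eq_iff cos_30 sin_30)
lemma eb_val: "eb = Complex (1/2) (sqrt 3 / 2)" unfolding eb_def by (simp add: complex_eq_iff cos_60 sin_60)
lemma ea3: "ea^3 = \<i>"
proof -
  have "ea^3 = cis (real 3 * (pi/6))" unfolding ea_def by (rule Complex.DeMoivre)
  also have "real 3 * (pi/6) = pi/2" by simp
  finally show ?thesis by simp
qed
lemma eb3: "eb^3 = -1"
proof -
  have "eb^3 = cis (real 3 * (pi/3))" unfolding eb_def by (rule Complex.DeMoivre)
  also have "real 3 * (pi/3) = pi" by simp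
  finally show ?thesis by simp
qed
lemma ea6: "ea^6 = -1"
proof - have "ea^6 = (ea^3)^2" by (simp flip: power_mult) then show ?thesis unfolding ea3 by simp qed
lemma eb6: "eb^6 = 1"
proof - have "eb^6 = (eb^3)^2" by (simp flip: power_mult) then show ?thesis unfolding eb3 by simp qed

lemma Pe_1: assumes "1 < a" "a \<le> sqrt 2" shows "Pe a 1 = Complex a 0"
proof -
  have a0: "a \<noteq> 0" using assms by simp
  have V: "VV a 1 = Complex (1 + (a^2-1)/4) 0" unfolding VV_def m0_def kg_sum[OF a0, symmetric]
    by (simp add: complex_eq_iff)
  have pos: "1 + (a^2-1)/4 > 0" using assms(1) by (simp add: one_less_power add_pos_nonneg)
  show ?thesis
  proof (rule Pe_eq[OF assms, of 1 _ "a / (1 + (a^2-1)/4)"])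
    show "Er a (Complex a 0) = 1" unfolding Er_def using a0 by simp
    show "Complex a 0 = complex_of_real (a / (1 + (a\<^sup>2 - 1) / 4)) * VV a 1"
      unfolding V using pos by (simp add: complex_eq_iff)
    show "a / (1 + (a\<^sup>2 - 1) / 4) > 0" using pos assms(1) by simp
  qed simp
qed

lemma Pe_i: assumes "1 < a" "a \<le> sqrt 2" shows "Pe a \<i> = Complex 0 1"
proof -
  have a0: "a \<noteq> 0" using assms by simp
  have V: "VV a \<i> = Complex 0 (1 - (gam a - kap a))" unfolding VV_def m0_def
    by (simp add: complex_eq_iff power3_eq_cube)
  have pos: "1 - (gam a - kap a) > 0" using bounds[OF assms] by simp
  show ?thesis
  proof (rule Pe_eq[OF assms, of _ _ "1 / (1 - (gam a - kap a))"])
    show "Er a (Complex 0 1) = 1" unfolding Er_def by simp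
    show "Complex 0 1 = complex_of_real (1 / (1 - (gam a - kap a))) * VV a \<i>"
      unfolding V using pos by (simp add: complex_eq_iff)
    show "1 / (1 - (gam a - kap a)) > 0" using pos by simp
  qed simp
qed

lemma Er_frac:
  assumes "a \<noteq> 0" "D \<noteq> 0" "u^2 + a^2 * v^2 = a^2 * D^2"
  shows "Er a (Complex (u/D) (v/D)) = 1"
proof -
  have "Er a (Complex (u/D) (v/D)) = (u^2 + a^2 * v^2) / (a^2 * D^2)"
    unfolding Er_def using assms(1,2) by (simp add: power_divide field_simps)
  then show ?thesis using assms by simp
qed

lemma scale_ea:
  assumes "a \<noteq> 0" "D \<noteq> 0"
  shows "Complex (2 * sqrt 3 * a^2/D) ((3*a^2-1)/D) = complex_of_real (4*a^2/D) * Complex (sqrt 3/2) ((3*a^2-1)/(4*a^2))"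
  using assms by (simp add: complex_eq_iff field_simps)

lemma Pe_ea: assumes "1 < a" "a \<le> sqrt 2"
  shows "Pe a ea = Complex (2 * sqrt 3 * a^2 / (3*a^2 + 1)) ((3*a^2 - 1) / (3*a^2 + 1))"
proof -
  have a0: "a \<noteq> 0" using assms by simp
  have V: "VV a ea = Complex (sqrt 3 / 2) ((3*a^2 - 1)/(4*a^2))"
  proof -
    have "VV a ea = ea + complex_of_real (kap a) * cnj (ea^3) + complex_of_real (gam a) * ea^3"
      unfolding VV_def m0_def by simp
    also have "\<dots> = Complex (sqrt 3 / 2) (1/2 + (gam a - kap a))"
      unfolding ea3 by (simp add: ea_val complex_eq_iff)
    also have "\<dots> = Complex (sqrt 3 / 2) ((3*a^2 - 1)/(4*a^2))"
      unfolding kg_diff[OF a0] using a0 by (simp add: field_simps)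
    finally show ?thesis .
  qed
  have d: "3*a^2 + 1 > 0" by (simp add: add_nonneg_pos)
  have s3: "sqrt 3 * sqrt 3 = 3" by simp
  show ?thesis
  proof (rule Pe_eq[OF assms, of _ _ "4*a^2 / (3*a^2 + 1)"])
    show "cmod ea = 1" unfolding ea_def by simp
    show "Er a (Complex (2 * sqrt 3 * a^2 / (3*a^2 + 1)) ((3*a^2 - 1) / (3*a^2 + 1))) = 1"
    proof (rule Er_frac[OF a0])
      show "3*a^2 + 1 \<noteq> 0" using d by simp
      show "(2 * sqrt 3 * a^2)^2 + a^2 * (3*a^2 - 1)^2 = a^2 * (3*a^2 + 1)^2"
        by (simp add: power_mult_distrib) algebra
    qed
    show "Complex (2 * sqrt 3 * a^2 / (3*a^2 + 1)) ((3*a^2 - 1) / (3*a^2 + 1))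
          = complex_of_real (4*a^2 / (3*a^2 + 1)) * VV a ea"
      unfolding V using scale_ea[OF a0, of "3*a^2+1"] d by simp
    show "4*a^2 / (3*a^2 + 1) > 0" using a0 d by simp
  qed
qed

lemma Pe_eb: assumes "1 < a" "a \<le> sqrt 2"
  shows "Pe a eb = Complex ((3*a - a^3) / (a^2 + 3)) (2 * sqrt 3 * a / (a^2 + 3))"
proof -
  have a0: "a \<noteq> 0" using assms by simp
  have V: "VV a eb = Complex ((3 - a^2)/4) (sqrt 3 / 2)"
  proof -
    have "VV a eb = eb + complex_of_real (kap a) * cnj (eb^3) + complex_of_real (gam a) * eb^3"
      unfolding VV_def m0_def by simp
    also have "\<dots> = Complex (1/2 - (kap a + gam a)) (sqrt 3 / 2)"
      unfolding eb3 by (simp add: eb_val complex_eq_iff)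
    also have "\<dots> = Complex ((3 - a^2)/4) (sqrt 3 / 2)"
      unfolding kg_sum[OF a0] by (simp add: field_simps)
    finally show ?thesis .
  qed
  have d: "a^2 + 3 > 0" by (simp add: add_nonneg_pos)
  have s3: "sqrt 3 * sqrt 3 = 3" by simp
  show ?thesis
  proof (rule Pe_eq[OF assms, of _ _ "4*a / (a^2 + 3)"])
    show "cmod eb = 1" unfolding eb_def by simp
    show "Er a (Complex ((3*a - a^3) / (a^2 + 3)) (2 * sqrt 3 * a / (a^2 + 3))) = 1"
    proof (rule Er_frac[OF a0])
      show "a^2 + 3 \<noteq> 0" using d by simp
      show "(3*a - a^3)^2 + a^2 * (2 * sqrt 3 * a)^2 = a^2 * (a^2 + 3)^2"
        by (simp add: power_mult_distrib) algebra
    qed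
    show "Complex ((3*a - a^3) / (a^2 + 3)) (2 * sqrt 3 * a / (a^2 + 3))
          = complex_of_real (4*a / (a^2 + 3)) * VV a eb"
      unfolding V using a0 d by (simp add: complex_eq_iff field_simps power3_eq_cube power2_eq_square)
    show "4*a / (a^2 + 3) > 0" using assms(1) d by simp
  qed
qed


lemma neg6: "(- u)^6 = (u::complex)^6" by simp
lemma cnj6: "Re (cnj u ^ 6) = Re (u ^ 6)" by (simp flip: complex_cnj_power)

lemma cm_basic: "cmod ea = 1" "cmod eb = 1" "cmod (1::complex) = 1" "cmod \<i> = 1"
  unfolding ea_def eb_def by simp_all

lemma cmod_var: assumes "cmod u = 1" shows "cmod (- u) = 1" "cmod (cnj u) = 1" "cmod (- cnj u) = 1"
  using assms by simp_all

lemma i6: "\<i>^6 = (-1::complex)"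
proof - have "\<i>^6 = (\<i>^2)^3" by (simp flip: power_mult) then show ?thesis by simp qed

lemma neq1: "-(3*a - a^3)/(a^2 + 3) = - ((3*a - a^3)/(a^2 + 3::real))" by (rule minus_divide_left[symmetric])
lemma neq2: "-(3*a^2 - 1)/(3*a^2 + 1) = - ((3*a^2 - 1)/(3*a^2 + 1::real))" by (rule minus_divide_left[symmetric])

lemma tri_a_char:
  assumes "1 < a" "a \<le> sqrt 2" "p \<in> tri_a_vertices a"
  shows "\<exists>e. cmod e = 1 \<and> Re (e^6) = 1 \<and> p = fromC (Pe a e)"
proof -
  have "p = fromC (Pe a 1) \<or> p = fromC (Pe a (- cnj eb)) \<or> p = fromC (Pe a (- eb))
      \<or> p = fromC (Pe a (- 1)) \<or> p = fromC (Pe a eb) \<or> p = fromC (Pe a (cnj eb))"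
    using assms(3) unfolding tri_a_vertices_def neq1
    by (auto simp: Pe_neg Pe_cnj Pe_1[OF assms(1,2)] Pe_eb[OF assms(1,2)] fromC_def)
  moreover have "Re ((1::complex)^6) = 1" "Re ((- cnj eb)^6) = 1" "Re ((- eb)^6) = 1"
    "Re ((- 1::complex)^6) = 1" "Re (eb^6) = 1" "Re (cnj eb^6) = 1"
    unfolding neg6 cnj6 eb6 by simp_all
  moreover note cm_basic cmod_var[OF cm_basic(2)] cmod_var[OF cm_basic(3)]
  ultimately show ?thesis by blast
qed

lemma tri_1_char:
  assumes "1 < a" "a \<le> sqrt 2" "p \<in> tri_1_vertices a"
  shows "\<exists>e. cmod e = 1 \<and> Re (e^6) = -1 \<and> p = fromC (Pe a e)"
proof -
  have "p = fromC (Pe a \<i>) \<or> p = fromC (Pe a (cnj ea)) \<or> p = fromC (Pe a (- ea))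
      \<or> p = fromC (Pe a (- \<i>)) \<or> p = fromC (Pe a ea) \<or> p = fromC (Pe a (- cnj ea))"
    using assms(3) unfolding tri_1_vertices_def neq2
    by (auto simp: Pe_neg Pe_cnj Pe_i[OF assms(1,2)] Pe_ea[OF assms(1,2)] fromC_def)
  moreover have "Re (\<i>^6) = -1" "Re ((- cnj ea)^6) = -1" "Re ((- ea)^6) = -1"
    "Re ((- \<i>)^6) = -1" "Re (ea^6) = -1" "Re (cnj ea^6) = -1"
    unfolding neg6 cnj6 ea6 i6 by simp_all
  moreover note cm_basic cmod_var[OF cm_basic(1)] cmod_var[OF cm_basic(4)]
  ultimately show ?thesis by blast
qed


lemma in_list:
  assumes "1 < a" "a \<le> sqrt 2"
    "u \<in> {1, -1, eb, cnj eb, -eb, -cnj eb, \<i>, -\<i>, ea, cnj ea, -ea, -cnj ea}"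
  shows "fromC (Pe a u) \<in> tri_a_vertices a \<union> tri_1_vertices a"
proof -
  have "u = 1 \<or> u = -1 \<or> u = eb \<or> u = cnj eb \<or> u = -eb \<or> u = -cnj eb \<or> u = \<i> \<or> u = -\<i> \<or> u = ea \<or> u = cnj ea \<or> u = -ea \<or> u = -cnj ea"
    using assms(3) by simp
  then show ?thesis
  proof (elim disjE)
    assume "u = 1" then show ?thesis unfolding tri_a_vertices_def tri_1_vertices_def neq1 neq2
      by (simp add: Pe_neg Pe_cnj Pe_i[OF assms(1,2)] Pe_ea[OF assms(1,2)] Pe_1[OF assms(1,2)] Pe_eb[OF assms(1,2)] fromC_def)
  next
    assume "u = -1" then show ?thesis unfolding tri_a_vertices_def tri_1_vertices_def neq1 neq2
      by (simp add: Pe_neg Pe_cnj Pe_i[OF assms(1,2)] Pe_ea[OF assms(1,2)] Pe_1[OF assms(1,2)] Pe_eb[OF assms(1,2)] fromC_def)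
  next
    assume "u = eb" then show ?thesis unfolding tri_a_vertices_def tri_1_vertices_def neq1 neq2
      by (simp add: Pe_neg Pe_cnj Pe_i[OF assms(1,2)] Pe_ea[OF assms(1,2)] Pe_1[OF assms(1,2)] Pe_eb[OF assms(1,2)] fromC_def)
  next
    assume "u = cnj eb" then show ?thesis unfolding tri_a_vertices_def tri_1_vertices_def neq1 neq2
      by (simp add: Pe_neg Pe_cnj Pe_i[OF assms(1,2)] Pe_ea[OF assms(1,2)] Pe_1[OF assms(1,2)] Pe_eb[OF assms(1,2)] fromC_def)
  next
    assume "u = -eb" then show ?thesis unfolding tri_a_vertices_def tri_1_vertices_def neq1 neq2
      by (simp add: Pe_neg Pe_cnj Pe_i[OF assms(1,2)] Pe_ea[OF assms(1,2)] Pe_1[OF assms(1,2)] Pe_eb[OF assms(1,2)] fromC_def)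
  next
    assume "u = -cnj eb" then show ?thesis unfolding tri_a_vertices_def tri_1_vertices_def neq1 neq2
      by (simp add: Pe_neg Pe_cnj Pe_i[OF assms(1,2)] Pe_ea[OF assms(1,2)] Pe_1[OF assms(1,2)] Pe_eb[OF assms(1,2)] fromC_def)
  next
    assume "u = \<i>" then show ?thesis unfolding tri_a_vertices_def tri_1_vertices_def neq1 neq2
      by (simp add: Pe_neg Pe_cnj Pe_i[OF assms(1,2)] Pe_ea[OF assms(1,2)] Pe_1[OF assms(1,2)] Pe_eb[OF assms(1,2)] fromC_def)
  next
    assume "u = -\<i>" then show ?thesis unfolding tri_a_vertices_def tri_1_vertices_def neq1 neq2
      by (simp add: Pe_neg Pe_cnj Pe_i[OF assms(1,2)] Pe_ea[OF assms(1,2)] Pe_1[OF assms(1,2)] Pe_eb[OF assms(1,2)] fromC_def)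
  next
    assume "u = ea" then show ?thesis unfolding tri_a_vertices_def tri_1_vertices_def neq1 neq2
      by (simp add: Pe_neg Pe_cnj Pe_i[OF assms(1,2)] Pe_ea[OF assms(1,2)] Pe_1[OF assms(1,2)] Pe_eb[OF assms(1,2)] fromC_def)
  next
    assume "u = cnj ea" then show ?thesis unfolding tri_a_vertices_def tri_1_vertices_def neq1 neq2
      by (simp add: Pe_neg Pe_cnj Pe_i[OF assms(1,2)] Pe_ea[OF assms(1,2)] Pe_1[OF assms(1,2)] Pe_eb[OF assms(1,2)] fromC_def)
  next
    assume "u = -ea" then show ?thesis unfolding tri_a_vertices_def tri_1_vertices_def neq1 neq2
      by (simp add: Pe_neg Pe_cnj Pe_i[OF assms(1,2)] Pe_ea[OF assms(1,2)] Pe_1[OF assms(1,2)] Pe_eb[OF assms(1,2)] fromC_def)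
  next
    assume "u = -cnj ea" then show ?thesis unfolding tri_a_vertices_def tri_1_vertices_def neq1 neq2
      by (simp add: Pe_neg Pe_cnj Pe_i[OF assms(1,2)] Pe_ea[OF assms(1,2)] Pe_1[OF assms(1,2)] Pe_eb[OF assms(1,2)] fromC_def)
  qed
qed

lemma cis_pi_plus: "cis (pi + x) = - cis x" by (simp flip: cis_mult)
lemma cis_2pi_plus: "cis (2*pi + x) = cis x" by (simp flip: cis_mult)
lemma cis_neg: "cis (- x) = cnj (cis x)" by (simp add: cis_cnj)

lemma angle12:
  assumes "sin (6*t) = 0"
  shows "cis t \<in> {1, -1, eb, cnj eb, -eb, -cnj eb, \<i>, -\<i>, ea, cnj ea, -ea, -cnj ea}"
proof -
  obtain n :: int where n: "6*t = of_int n * pi" using assms sin_zero_iff_int2 by blast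
  define k where "k = n div 12"
  define r where "r = n mod 12"
  have nkr: "n = 12*k + r" unfolding k_def r_def by simp
  have r0: "0 \<le> r" "r < 12" unfolding r_def by simp_all
  obtain m :: nat where m: "r = int m" using r0(1) nonneg_eq_int by blast
  have m12: "m < 12" using r0(2) m by simp
  have "t = 2*pi * of_int k + real m * pi / 6"
    using n unfolding nkr m by (simp add: field_simps)
  then have "cis t = cis (2*pi * of_int k) * cis (real m * pi / 6)" by (simp add: cis_mult[symmetric])
  also have "cis (2*pi * of_int k) = 1" by (simp add: cis_multiple_2pi)
  finally have ct: "cis t = cis (real m * pi / 6)" by simp
  have "m = 0 \<or> m = 1 \<or> m = 2 \<or> m = 3 \<or> m = 4 \<or> m = 5 \<or> m = 6 \<or> m = 7 \<or> m = 8 \<or> m = 9 \<or> m = 10 \<or> m = 11"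
    using m12 by presburger
  then have "cis (real m * pi / 6) \<in> {1, -1, eb, cnj eb, -eb, -cnj eb, \<i>, -\<i>, ea, cnj ea, -ea, -cnj ea}"
  proof (elim disjE)
    assume "m = 0" then show ?thesis by simp
  next
    assume "m = 1" then show ?thesis unfolding ea_def by simp
  next
    assume "m = 2" then have "real m * pi / 6 = pi/3" by simp
    then show ?thesis unfolding eb_def by simp
  next
    assume "m = 3" then have "real m * pi / 6 = pi/2" by simp
    then show ?thesis by simp
  next
    assume "m = 4" then have "real m * pi / 6 = pi + - (pi/3)" by simp
    then show ?thesis unfolding eb_def by (simp only: cis_pi_plus cis_neg) simp
  next
    assume "m = 5" then have "real m * pi / 6 = pi + - (pi/6)" by simp
    then show ?thesis unfolding ea_def by (simp only: cis_pi_plus cis_neg) simp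
  next
    assume "m = 6" then have "real m * pi / 6 = pi" by simp
    then show ?thesis by simp
  next
    assume "m = 7" then have "real m * pi / 6 = pi + pi/6" by simp
    then show ?thesis unfolding ea_def by (simp only: cis_pi_plus) simp
  next
    assume "m = 8" then have "real m * pi / 6 = pi + pi/3" by simp
    then show ?thesis unfolding eb_def by (simp only: cis_pi_plus) simp
  next
    assume "m = 9" then have "real m * pi / 6 = pi + pi/2" by simp
    then show ?thesis by (simp only: cis_pi_plus) simp
  next
    assume "m = 10" then have "real m * pi / 6 = 2*pi + - (pi/3)" by simp
    then show ?thesis unfolding eb_def by (simp only: cis_2pi_plus cis_neg) simp
  next
    assume "m = 11" then have "real m * pi / 6 = 2*pi + - (pi/6)" by simp
    then show ?thesis unfolding ea_def by (simp only: cis_2pi_plus cis_neg) simp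
  qed
  then show ?thesis using ct by simp
qed


definition Pt :: "real \<Rightarrow> real \<Rightarrow> real \<times> real" where "Pt a t = fromC (Pe a (cis t))"

lemma Re_cis6: "Re ((cis t)^6) = cos (6*t)"
proof -
  have "(cis t)^6 = cis (real 6 * t)" by (rule Complex.DeMoivre)
  then show ?thesis by simp
qed

lemma side_Pt: assumes "1 < a" "a \<le> sqrt 2" shows "side_s a (Pt a t) = Gs a (cos (6*t))"
  unfolding Pt_def side_formula[OF assms norm_cis] Re_cis6 ..

lemma Pt_in: assumes "1 < a" "a \<le> sqrt 2" shows "Pt a t \<in> ellipseY a"
  unfolding Pt_def ell_fromC using Er_Pe[OF assms norm_cis] .

lemma Pt_cont: assumes "1 < a" "a \<le> sqrt 2" shows "continuous_on UNIV (Pt a)"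
proof -
  have ne: "sqrt (Er a (VV a (cis t))) \<noteq> 0" for t
    using ErV_pos[OF assms norm_cis, of t] by (metis less_irrefl real_sqrt_eq_zero_cancel_iff)
  have cV: "continuous_on UNIV (\<lambda>t. VV a (cis t))"
    unfolding VV_def m0_def by (intro continuous_intros)
  have cE: "continuous_on UNIV (\<lambda>t. Er a (VV a (cis t)))"
    unfolding Er_def using assms(1) by (intro continuous_intros cV) auto
  have cR: "continuous_on UNIV (\<lambda>t. rho a (cis t))"
    unfolding rho_def by (intro continuous_intros cE) (use ne in auto)
  have "continuous_on UNIV (\<lambda>t. Pe a (cis t))"
    unfolding Pe_def by (intro continuous_intros cR cV)
  then show ?thesis unfolding Pt_def fromC_def by (intro continuous_intros)
qed

lemma Pt_epsdelta:
  assumes "1 < a" "a \<le> sqrt 2" "e > 0"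
  shows "\<exists>d>0. \<forall>t. \<bar>t0 - t\<bar> < d \<longrightarrow> dist (Pt a t) (Pt a t0) < e"
proof -
  have "isCont (Pt a) t0" using Pt_cont[OF assms(1,2)] by (simp add: continuous_on_eq_continuous_at)
  then obtain d where "d > 0" "\<forall>t. dist t t0 < d \<longrightarrow> dist (Pt a t) (Pt a t0) < e"
    using assms(3) unfolding continuous_at_eps_delta by blast
  then show ?thesis by (auto simp: dist_real_def abs_minus_commute)
qed

lemma deriv_cos6: "DERIV (\<lambda>t. cos (6*t)) t0 :> - sin (6*t0) * 6"
  by (auto intro!: derivative_eq_intros)

lemma crit:
  assumes "1 < a" "a \<le> sqrt 2" "p \<in> ellipseY a"
    "local_min_on (ellipseY a) (side_s a) p \<or> local_max_on (ellipseY a) (side_s a) p"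
  shows "p \<in> tri_a_vertices a \<union> tri_1_vertices a"
proof -
  obtain t0 where t0: "p = Pt a t0" using surj_Pe[OF assms(1-3)] unfolding Pt_def by blast
  have cb: "-1 \<le> cos (x::real)" for x by simp
  have "sin (6*t0) = 0"
    using assms(4)
  proof
    assume "local_min_on (ellipseY a) (side_s a) p"
    then obtain e where e: "e > 0" "\<forall>q\<in>ellipseY a. dist q p < e \<longrightarrow> side_s a p \<le> side_s a q"
      unfolding local_min_on_def by blast
    obtain d where d: "d > 0" "\<forall>t. \<bar>t0 - t\<bar> < d \<longrightarrow> dist (Pt a t) (Pt a t0) < e"
      using Pt_epsdelta[OF assms(1,2) e(1)] by blast
    have "\<forall>t. \<bar>t0 - t\<bar> < d \<longrightarrow> cos (6*t) \<le> cos (6*t0)"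
    proof (intro allI impI)
      fix t assume "\<bar>t0 - t\<bar> < d"
      then have "side_s a (Pt a t0) \<le> side_s a (Pt a t)" using d(2) e(2) Pt_in[OF assms(1,2)] t0 by blast
      then have "Gs a (cos (6*t0)) \<le> Gs a (cos (6*t))" unfolding side_Pt[OF assms(1,2)] .
      then show "cos (6*t) \<le> cos (6*t0)" by (rule Gs_inj_le[OF assms(1) cb cb])
    qed
    then have "- sin (6*t0) * 6 = 0" by (rule DERIV_local_max[OF deriv_cos6 d(1)])
    then show ?thesis by simp
  next
    assume "local_max_on (ellipseY a) (side_s a) p"
    then obtain e where e: "e > 0" "\<forall>q\<in>ellipseY a. dist q p < e \<longrightarrow> side_s a q \<le> side_s a p"
      unfolding local_max_on_def by blast
    obtain d where d: "d > 0" "\<forall>t. \<bar>t0 - t\<bar> < d \<longrightarrow> dist (Pt a t) (Pt a t0) < e"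
      using Pt_epsdelta[OF assms(1,2) e(1)] by blast
    have "\<forall>t. \<bar>t0 - t\<bar> < d \<longrightarrow> cos (6*t0) \<le> cos (6*t)"
    proof (intro allI impI)
      fix t assume "\<bar>t0 - t\<bar> < d"
      then have "side_s a (Pt a t) \<le> side_s a (Pt a t0)" using d(2) e(2) Pt_in[OF assms(1,2)] t0 by blast
      then have "Gs a (cos (6*t)) \<le> Gs a (cos (6*t0))" unfolding side_Pt[OF assms(1,2)] .
      then show "cos (6*t0) \<le> cos (6*t)" by (rule Gs_inj_le[OF assms(1) cb cb])
    qed
    then have "- sin (6*t0) * 6 = 0" by (rule DERIV_local_min[OF deriv_cos6 d(1)])
    then show ?thesis by simp
  qed
  then have "cis t0 \<in> {1, -1, eb, cnj eb, -eb, -cnj eb, \<i>, -\<i>, ea, cnj ea, -ea, -cnj ea}"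
    by (rule angle12)
  then show ?thesis using in_list[OF assms(1,2)] t0 unfolding Pt_def by blast
qed

theorem mainTheorem18:
  fixes a :: real
  assumes "1 < a" and "a \<le> sqrt 2"
  shows "(\<forall>p\<in>tri_a_vertices a. side_s a p = 4* sqrt 3*a/(a^2 + 3) \<and>
            (\<forall>q\<in>ellipseY a. side_s a p \<le> side_s a q))
       \<and> (\<forall>p\<in>tri_1_vertices a. side_s a p = 4* sqrt 3*a^2/(3*a^2 + 1) \<and>
            (\<forall>q\<in>ellipseY a. side_s a q \<le> side_s a p))
       \<and> (\<forall>p\<in>ellipseY a. (local_min_on (ellipseY a) (side_s a) p \<or> local_max_on (ellipseY a) (side_s a) p)
            \<longrightarrow> p \<in> tri_a_vertices a \<union> tri_1_vertices a)"
proof (intro conjI ballI impI)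
  have sq: "side_s a q = Gs a (Re ((cis t)^6))" if "q = fromC (Pe a (cis t))" for q t
    using side_formula[OF assms norm_cis] that by simp
  fix p assume p: "p \<in> tri_a_vertices a"
  obtain e where e: "cmod e = 1" "Re (e^6) = 1" "p = fromC (Pe a e)" using tri_a_char[OF assms p] by blast
  have sp: "side_s a p = Gs a 1" using side_formula[OF assms e(1)] e by simp
  then show "side_s a p = 4* sqrt 3*a/(a^2 + 3)" using Gs_1[OF assms(1)] by simp
  fix q assume q: "q \<in> ellipseY a"
  obtain t where t: "q = fromC (Pe a (cis t))" using surj_Pe[OF assms q] by blast
  have "-1 \<le> Re ((cis t)^6) \<and> Re ((cis t)^6) \<le> 1" by (rule Re6_bounds) simp
  then show "side_s a p \<le> side_s a q" unfolding sp sq[OF t] by (intro Gs_anti[OF assms(1)]) auto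
next
  have sq: "side_s a q = Gs a (Re ((cis t)^6))" if "q = fromC (Pe a (cis t))" for q t
    using side_formula[OF assms norm_cis] that by simp
  fix p assume p: "p \<in> tri_1_vertices a"
  obtain e where e: "cmod e = 1" "Re (e^6) = -1" "p = fromC (Pe a e)" using tri_1_char[OF assms p] by blast
  have sp: "side_s a p = Gs a (-1)" using side_formula[OF assms e(1)] e by simp
  then show "side_s a p = 4* sqrt 3*a^2/(3*a^2 + 1)" using Gs_m1[OF assms(1)] by simp
  fix q assume q: "q \<in> ellipseY a"
  obtain t where t: "q = fromC (Pe a (cis t))" using surj_Pe[OF assms q] by blast
  have "-1 \<le> Re ((cis t)^6) \<and> Re ((cis t)^6) \<le> 1" by (rule Re6_bounds) simp
  then show "side_s a q \<le> side_s a p" unfolding sp sq[OF t] by (intro Gs_anti[OF assms(1)]) auto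
next
  fix p assume "p \<in> ellipseY a"
    "local_min_on (ellipseY a) (side_s a) p \<or> local_max_on (ellipseY a) (side_s a) p"
  then show "p \<in> tri_a_vertices a \<union> tri_1_vertices a" using crit[OF assms] by blast
qed


end
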